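(* Let $C_*\ge3$ and $H>0$, and let $R_e=R_e(C_*,H)$ be the $q$-effective radius. Let $x,y\in\mathbb{Z}^d$ and let $\gamma\in\mathbb{G}_H(x,y)$ be a geodesic of $\mathrm{T}_H(x,y)$. Suppose $e\in\gamma$ is an edge with $x,y\notin\Lambda_{3R_e}(e)$. Then there exists a path $\eta_e$ from $x$ to $y$ such that (a) $\eta_e\cap\Lambda_{R_e-1}(e)=\emptyset$ and every edge of $\eta_e\setminus\gamma$ is $q$-open; (b) $|\eta_e\setminus\gamma|\le C_*R_e$.
   Context: Edge weights $(\tau_e)$ on $\mathcal{E}(\mathbb{Z}^d)$ are i.i.d. with values in $[0,\infty]$; for a fixed $\lambda>0$, an edge is $q$-open if $\tau_e\le\lambda$. A path is a sequence of distinct vertices with consecutive vertices at $\ell^1$-distance 1; $\mathcal{P}(A)$ is the set of paths in $A$, $|\cdot|$ counts edges. $\mathrm{T}_H^A(u,v)$ is the passage time with weights $\tau_e\wedge H$ over paths in $A$; $\mathrm{T}_H=\mathrm{T}_H^{\mathbb{Z}^d}$; $\mathbb{G}_H(u,v;A)$ is the set of paths in $A$ from $u$ to $v$ attaining $\mathrm{T}_H^A(u,v)$, $\mathbb{G}_H(u,v)=\mathbb{G}_H(u,v;\mathbb{Z}^d)$, $\mathbb{G}_H(A)=\bigcup_{u,v\in A}\mathbb{G}_H(u,v;A)$. $\mathrm{D}_q^U(A,B)$ is the minimal number of edges of a $q$-open path inside $U$ from $A$ to $B$. $\Lambda_t(x)=x+[-t,t]^d\cap\mathbb{Z}^d$,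 $\partial\Lambda_t(x)=\Lambda_t(x)\setminus\Lambda_{t-1}(x)$; for $e=(x_e,y_e)$ with $\|x_e\|_1<\|y_e\|_1$, $\Lambda_N(e)=\Lambda_N(x_e)$, $\mathrm{A}_N(e)=\Lambda_{3N}(e)\setminus\Lambda_N(e)$, and $\mathscr{C}(\mathrm{A}_N(e))$ is the set of paths inside $\mathrm{A}_N(e)$ joining $\partial\Lambda_N(e)$ and $\partial\Lambda_{3N}(e)$. The effective radius is $R_e=\inf\{N\ge3:\forall\gamma_1,\gamma_2\in\mathbb{G}_H(\Lambda_{C_*N}(e))\cap\mathscr{C}(\mathrm{A}_N(e)),\ \mathrm{D}_q^{\mathrm{A}_N(e)}(\gamma_1,\gamma_2)\le C_*N\}$. (In the paper $C_*$ is the constant fixed by its tail estimate for $R_e$.) *)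

theory Defs
  imports "HOL-Analysis.Analysis"
begin

text \<open>Vertices of the lattice Z^d are elements of int ^ 'd (d = CARD('d)).
  Edges are unordered pairs {u,v} of vertices at l1-distance 1.\<close>

definition l1 :: "int ^ 'd \<Rightarrow> int" where
  "l1 z = (\<Sum>i\<in>UNIV. \<bar>z $ i\<bar>)"

definition adj :: "int ^ 'd \<Rightarrow> int ^ 'd \<Rightarrow> bool" where
  "adj u v \<longleftrightarrow> l1 (u - v) = 1"

definition is_path :: "(int ^ 'd) list \<Rightarrow> bool" where
  "is_path p \<longleftrightarrow> p \<noteq> [] \<and> distinct p \<and>
     (\<forall>i. Suc i < length p \<longrightarrow> adj (p ! i) (p ! Suc i))"

definition path_edges :: "(int ^ 'd) list \<Rightarrow> (int ^ 'd) set set" where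
  "path_edges p = {{p ! i, p ! Suc i} | i. Suc i < length p}"

definition path_from_to :: "(int ^ 'd) list \<Rightarrow> int ^ 'd \<Rightarrow> int ^ 'd \<Rightarrow> bool" where
  "path_from_to p u v \<longleftrightarrow> is_path p \<and> hd p = u \<and> last p = v"

definition path_weight :: "((int ^ 'd) set \<Rightarrow> ereal) \<Rightarrow> real \<Rightarrow> (int ^ 'd) list \<Rightarrow> ereal" where
  "path_weight \<tau> H p = (\<Sum>e\<in>path_edges p. min (\<tau> e) (ereal H))"

definition passage_time ::
  "((int ^ 'd) set \<Rightarrow> ereal) \<Rightarrow> real \<Rightarrow> (int ^ 'd) set \<Rightarrow> int ^ 'd \<Rightarrow> int ^ 'd \<Rightarrow> ereal" where
  "passage_time \<tau> H A u v =
     (INF p \<in> {p. path_from_to p u v \<and> set p \<subseteq> A}. path_weight \<tau> H p)"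

definition geodesics ::
  "((int ^ 'd) set \<Rightarrow> ereal) \<Rightarrow> real \<Rightarrow> (int ^ 'd) set \<Rightarrow> int ^ 'd \<Rightarrow> int ^ 'd \<Rightarrow> (int ^ 'd) list set" where
  "geodesics \<tau> H A u v =
     {p. path_from_to p u v \<and> set p \<subseteq> A \<and> path_weight \<tau> H p = passage_time \<tau> H A u v}"

definition geodesics_in ::
  "((int ^ 'd) set \<Rightarrow> ereal) \<Rightarrow> real \<Rightarrow> (int ^ 'd) set \<Rightarrow> (int ^ 'd) list set" where
  "geodesics_in \<tau> H A = (\<Union>u\<in>A. \<Union>v\<in>A. geodesics \<tau> H A u v)"

definition q_open :: "((int ^ 'd) set \<Rightarrow> ereal) \<Rightarrow> real \<Rightarrow> (int ^ 'd) set \<Rightarrow> bool" where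
  "q_open \<tau> lam e \<longleftrightarrow> \<tau> e \<le> ereal lam"

definition Dq ::
  "((int ^ 'd) set \<Rightarrow> ereal) \<Rightarrow> real \<Rightarrow> (int ^ 'd) set \<Rightarrow> (int ^ 'd) set \<Rightarrow> (int ^ 'd) set \<Rightarrow> ereal" where
  "Dq \<tau> lam U A B =
     (INF p \<in> {p. is_path p \<and> set p \<subseteq> U \<and> hd p \<in> A \<and> last p \<in> B \<and>
                 (\<forall>e\<in>path_edges p. q_open \<tau> lam e)}.
        ereal (real (length p - 1)))"

definition box_at :: "int ^ 'd \<Rightarrow> real \<Rightarrow> (int ^ 'd) set" where
  "box_at z t = {w. \<forall>i. real_of_int \<bar>w $ i - z $ i\<bar> \<le> t}"

definition bdry_at :: "int ^ 'd \<Rightarrow> real \<Rightarrow> (int ^ 'd) set" where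
  "bdry_at z t = box_at z t - box_at z (t - 1)"

definition edge_base :: "(int ^ 'd) set \<Rightarrow> int ^ 'd" where
  "edge_base e = (SOME z. z \<in> e \<and> (\<forall>w\<in>e. l1 z < l1 w \<or> w = z))"

definition annulus :: "(int ^ 'd) set \<Rightarrow> nat \<Rightarrow> (int ^ 'd) set" where
  "annulus e N = box_at (edge_base e) (3 * real N) - box_at (edge_base e) (real N)"

text \<open>C(A_N(e)): paths in the (closed) annulus joining the inner boundary
  dLambda_N(e) and the outer boundary dLambda_{3N}(e).\<close>
definition crossings :: "(int ^ 'd) set \<Rightarrow> nat \<Rightarrow> (int ^ 'd) list set" where
  "crossings e N = {p. is_path p \<and>
      set p \<subseteq> box_at (edge_base e) (3 * real N) - box_at (edge_base e) (real N - 1) \<and>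
      ((hd p \<in> bdry_at (edge_base e) (real N) \<and> last p \<in> bdry_at (edge_base e) (3 * real N)) \<or>
       (hd p \<in> bdry_at (edge_base e) (3 * real N) \<and> last p \<in> bdry_at (edge_base e) (real N)))}"

definition eff_radius_ok ::
  "((int ^ 'd) set \<Rightarrow> ereal) \<Rightarrow> real \<Rightarrow> real \<Rightarrow> real \<Rightarrow> (int ^ 'd) set \<Rightarrow> nat \<Rightarrow> bool" where
  "eff_radius_ok \<tau> H lam C e N \<longleftrightarrow>
     (\<forall>\<gamma>1 \<in> geodesics_in \<tau> H (box_at (edge_base e) (C * real N)) \<inter> crossings e N.
      \<forall>\<gamma>2 \<in> geodesics_in \<tau> H (box_at (edge_base e) (C * real N)) \<inter> crossings e N.
        Dq \<tau> lam (annulus e N) (set \<gamma>1) (set \<gamma>2) \<le> ereal (C * real N))"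

definition eff_radius ::
  "((int ^ 'd) set \<Rightarrow> ereal) \<Rightarrow> real \<Rightarrow> real \<Rightarrow> real \<Rightarrow> (int ^ 'd) set \<Rightarrow> enat" where
  "eff_radius \<tau> H lam C e = (INF N \<in> {N. 3 \<le> N \<and> eff_radius_ok \<tau> H lam C e N}. enat N)"

end

theory Submission
  imports Defs
begin

definition walk :: "(int ^ 'd) list \<Rightarrow> bool" where
  "walk w \<longleftrightarrow> w \<noteq> [] \<and> (\<forall>i. Suc i < length w \<longrightarrow> adj (w ! i) (w ! Suc i))"

lemma is_path_walk: "is_path p \<longleftrightarrow> walk p \<and> distinct p"
  unfolding is_path_def walk_def by auto

lemma walk_Cons: "walk (x # l) \<longleftrightarrow> (l = [] \<or> (adj x (hd l) \<and> walk l))"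
proof (cases l)
  case Nil then show ?thesis by (simp add: walk_def)
next
  case (Cons b l')
  show ?thesis
  proof
    assume h: "walk (x # l)"
    have "adj x (hd l)" using h Cons unfolding walk_def by force
    moreover have "walk l" unfolding walk_def using h Cons
      by (auto simp: walk_def)
    ultimately show "l = [] \<or> (adj x (hd l) \<and> walk l)" by simp
  next
    assume h: "l = [] \<or> (adj x (hd l) \<and> walk l)"
    then have a: "adj x b" and w: "walk l" using Cons by auto
    show "walk (x # l)" unfolding walk_def
    proof (intro conjI allI impI)
      fix i assume "Suc i < length (x # l)"
      then show "adj ((x # l) ! i) ((x # l) ! Suc i)"
        using a w Cons by (cases i) (auto simp: walk_def)
    qed simp
  qed
qed

lemma path_edges_Nil[simp]: "path_edges [] = {}"
  by (simp add: path_edges_def)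

lemma path_edges_Cons: "path_edges (x # l) = (if l = [] then {} else insert {x, hd l} (path_edges l))"
proof (cases l)
  case Nil then show ?thesis by (simp add: path_edges_def)
next
  case (Cons b l')
  have "path_edges (x # l) = insert {x, b} (path_edges l)"
  proof
    show "path_edges (x # l) \<subseteq> insert {x, b} (path_edges l)"
    proof
      fix e assume "e \<in> path_edges (x # l)"
      then obtain i where e: "e = {(x#l) ! i, (x#l) ! Suc i}" "Suc i < length (x#l)"
        unfolding path_edges_def by auto
      show "e \<in> insert {x, b} (path_edges l)"
      proof (cases i)
        case 0 then show ?thesis using e Cons by simp
      next
        case (Suc j) then show ?thesis using e unfolding path_edges_def by auto
      qed
    qed
  next
    show "insert {x, b} (path_edges l) \<subseteq> path_edges (x # l)"
    proof
      fix e assume "e \<in> insert {x, b} (path_edges l)"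
      then consider "e = {x, b}" | "e \<in> path_edges l" by auto
      then show "e \<in> path_edges (x # l)"
      proof cases
        case 1 then show ?thesis unfolding path_edges_def using Cons
          by (auto intro!: exI[of _ 0])
      next
        case 2
        then obtain i where e: "e = {l ! i, l ! Suc i}" "Suc i < length l"
          unfolding path_edges_def by auto
        then show ?thesis unfolding path_edges_def
          by (auto intro!: exI[of _ "Suc i"])
      qed
    qed
  qed
  then show ?thesis using Cons by simp
qed

lemma walk_append:
  "walk (xs @ ys) \<longleftrightarrow> (if xs = [] then walk ys else if ys = [] then walk xs
      else walk xs \<and> walk ys \<and> adj (last xs) (hd ys))"
proof (induction xs)
  case Nil then show ?case by simp
next
  case (Cons x xs)
  show ?case
  proof (cases "xs = []")
    case True then show ?thesis by (cases ys) (auto simp: walk_Cons)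
  next
    case False then show ?thesis using Cons.IH
      by (cases ys) (auto simp: walk_Cons)
  qed
qed

lemma path_edges_single[simp]: "path_edges [x] = {}"
  by (simp add: path_edges_def)

lemma path_edges_Cons2: "path_edges (x # y # l) = insert {x, y} (path_edges (y # l))"
  by (subst path_edges_Cons) simp

lemma path_edges_append:
  "path_edges (xs @ ys) = path_edges xs \<union> path_edges ys \<union>
     (if xs = [] \<or> ys = [] then {} else {{last xs, hd ys}})"
proof (induction xs)
  case Nil then show ?case by simp
next
  case (Cons x xs)
  show ?case
  proof (cases "xs = []")
    case True
    show ?thesis
    proof (cases ys)
      case Nil then show ?thesis by simp
    next
      case (Cons y l)
      have "path_edges ((x # xs) @ ys) = insert {x, y} (path_edges ys)"
        using True Cons path_edges_Cons2[of x y l] by simp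
      then show ?thesis using True Cons by simp
    qed
  next
    case False
    have 1: "path_edges (x # xs @ ys) = insert {x, hd xs} (path_edges (xs @ ys))"
      using False path_edges_Cons[of x "xs @ ys"] by simp
    have 2: "path_edges (x # xs) = insert {x, hd xs} (path_edges xs)"
      using False path_edges_Cons[of x xs] by simp
    have 3: "last (x # xs) = last xs" using False by simp
    show ?thesis unfolding append_Cons 1 2 3 Cons.IH using False by auto
  qed
qed

lemma walk_split: "walk (xs @ a # zs) \<longleftrightarrow> walk (xs @ [a]) \<and> walk (a # zs)"
  by (auto simp: walk_append walk_Cons)

lemma path_edges_split: "path_edges (xs @ a # zs) = path_edges (xs @ [a]) \<union> path_edges (a # zs)"
proof -
  have "path_edges (xs @ a # zs) = path_edges xs \<union> path_edges (a # zs) \<union> (if xs = [] then {} else {{last xs, a}})"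
    by (simp add: path_edges_append)
  moreover have "path_edges (xs @ [a]) = path_edges xs \<union> (if xs = [] then {} else {{last xs, a}})"
    by (simp add: path_edges_append)
  ultimately show ?thesis by auto
qed

lemma path_edges_subset_set: "f \<in> path_edges l \<Longrightarrow> f \<subseteq> set l"
  unfolding path_edges_def by auto

lemma path_edges_walk_adj: "walk l \<Longrightarrow> f \<in> path_edges l \<Longrightarrow> \<exists>u v. f = {u, v} \<and> adj u v"
  unfolding path_edges_def walk_def by auto

lemma path_edges_image: "path_edges l = (\<lambda>i. {l ! i, l ! Suc i}) ` {..< length l - 1}"
proof -
  have "{i. Suc i < length l} = {..< length l - 1}" by auto
  moreover have "path_edges l = (\<lambda>i. {l ! i, l ! Suc i}) ` {i. Suc i < length l}"
    unfolding path_edges_def by blast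
  ultimately show ?thesis by simp
qed

lemma finite_path_edges: "finite (path_edges l)"
  unfolding path_edges_image by simp

lemma card_path_edges: "card (path_edges l) \<le> length l - 1"
  unfolding path_edges_image using card_image_le[of "{..< length l - 1}"] by simp

lemma loop_erase:
  "walk w \<Longrightarrow> \<exists>p. is_path p \<and> hd p = hd w \<and> last p = last w \<and> set p \<subseteq> set w
     \<and> path_edges p \<subseteq> path_edges w"
proof (induction "length w" arbitrary: w rule: less_induct)
  case less
  show ?case
  proof (cases "distinct w")
    case True then show ?thesis using less.prems by (intro exI[of _ w]) (auto simp: is_path_walk)
  next
    case False
    then obtain xs ys zs a where w: "w = xs @ [a] @ ys @ [a] @ zs"
      using not_distinct_decomp by blast
    define w' where "w' = xs @ [a] @ zs"
    have len: "length w' < length w" unfolding w w'_def by simp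
    have "walk (xs @ [a]) \<and> walk (a # ys @ a # zs)" using less.prems unfolding w
      using walk_split[of xs a "ys @ a # zs"] by simp
    moreover have "walk ((a # ys) @ a # zs) \<Longrightarrow> walk (a # zs)" using walk_split[of "a#ys" a zs] by blast
    ultimately have "walk w'" unfolding w'_def using walk_split[of xs a zs] by simp
    note ex = less.hyps[OF len this]
    obtain p where "is_path p \<and> hd p = hd w' \<and> last p = last w' \<and> set p \<subseteq> set w'
      \<and> path_edges p \<subseteq> path_edges w'" using ex by (rule exE)
    then have p: "is_path p" "hd p = hd w'" "last p = last w'" "set p \<subseteq> set w'"
      "path_edges p \<subseteq> path_edges w'" by simp_all
    have e: "path_edges w' \<subseteq> path_edges w" unfolding w w'_def
      using path_edges_split[of xs a zs] path_edges_split[of xs a "ys @ a # zs"]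
        path_edges_split[of "a#ys" a zs] by auto
    have s: "set w' \<subseteq> set w" unfolding w w'_def by auto
    have h: "hd w' = hd w" unfolding w w'_def by (cases xs; simp)
    have l: "last w' = last w" unfolding w w'_def by (cases zs; simp)
    have a: "set p \<subseteq> set w" using p(4) s by (rule order_trans)
    have b: "path_edges p \<subseteq> path_edges w" using p(5) e by (rule order_trans)
    show ?thesis
    proof (intro exI[of _ p] conjI)
      show "is_path p" by (rule p(1))
      show "hd p = hd w" using p(2) h by simp
      show "last p = last w" using p(3) l by simp
    qed (rule a, rule b)
  qed
qed

lemma l1_minus_commute: "l1 (u - v) = l1 (v - u)"
  unfolding l1_def by (simp add: abs_minus_commute)

lemma adj_sym: "adj u v \<Longrightarrow> adj v u"
  unfolding adj_def using l1_minus_commute by metis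

lemma adj_coord: "adj u v \<Longrightarrow> \<bar>u $ i - v $ i\<bar> \<le> 1"
proof -
  assume "adj u v"
  then have "(\<Sum>j\<in>UNIV. \<bar>(u - v) $ j\<bar>) = 1" unfolding adj_def l1_def by simp
  moreover have "\<bar>(u - v) $ i\<bar> \<le> (\<Sum>j\<in>UNIV. \<bar>(u - v) $ j\<bar>)"
    by (rule member_le_sum) auto
  ultimately show ?thesis by simp
qed

lemma box_adj: "adj u v \<Longrightarrow> u \<in> box_at z t \<Longrightarrow> v \<in> box_at z (t + 1)"
proof -
  assume a: "adj u v" and u: "u \<in> box_at z t"
  show "v \<in> box_at z (t + 1)" unfolding box_at_def
  proof (intro CollectI allI)
    fix i
    have "\<bar>v $ i - z $ i\<bar> \<le> \<bar>u $ i - z $ i\<bar> + \<bar>u $ i - v $ i\<bar>" by linarith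
    then have "real_of_int \<bar>v $ i - z $ i\<bar> \<le> real_of_int \<bar>u $ i - z $ i\<bar> + real_of_int \<bar>u $ i - v $ i\<bar>"
      by linarith
    moreover have "real_of_int \<bar>u $ i - z $ i\<bar> \<le> t" using u unfolding box_at_def by auto
    moreover have "real_of_int \<bar>u $ i - v $ i\<bar> \<le> 1" using adj_coord[OF a, of i] by linarith
    ultimately show "real_of_int \<bar>v $ i - z $ i\<bar> \<le> t + 1" by linarith
  qed
qed

lemma box_mono: "t \<le> t' \<Longrightarrow> box_at z t \<subseteq> box_at z t'"
  unfolding box_at_def by (auto intro: order_trans)

lemma center_in_box: "0 \<le> t \<Longrightarrow> z \<in> box_at z t"
  unfolding box_at_def by auto

lemma abs_parity: "even (\<bar>a\<bar> - \<bar>b\<bar> - \<bar>a - b\<bar> :: int)"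
  by (cases "a \<ge> 0"; cases "b \<ge> 0"; cases "a \<ge> b") (auto simp: abs_if)

lemma adj_l1_neq: "adj u v \<Longrightarrow> l1 u \<noteq> l1 v"
proof
  assume a: "adj u v" and e: "l1 u = l1 v"
  have "l1 u - l1 v - l1 (u - v) = (\<Sum>i\<in>UNIV. \<bar>u $ i\<bar> - \<bar>v $ i\<bar> - \<bar>u $ i - v $ i\<bar>)"
    unfolding l1_def by (simp add: sum_subtractf)
  moreover have "even (\<Sum>i\<in>UNIV. \<bar>u $ i\<bar> - \<bar>v $ i\<bar> - \<bar>u $ i - v $ i\<bar>)"
    by (rule dvd_sum) (rule abs_parity)
  ultimately have "even (l1 u - l1 v - l1 (u - v))" by simp
  then show False using a e unfolding adj_def by simp
qed

lemma edge_base_mem: "adj u v \<Longrightarrow> edge_base {u, v} \<in> {u, v}"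
proof -
  assume a: "adj u v"
  have "\<exists>z. z \<in> {u, v} \<and> (\<forall>w\<in>{u, v}. l1 z < l1 w \<or> w = z)"
  proof (cases "l1 u < l1 v")
    case True then show ?thesis by (intro exI[of _ u]) auto
  next
    case False
    then have "l1 v < l1 u" using adj_l1_neq[OF a] by linarith
    then show ?thesis by (intro exI[of _ v]) auto
  qed
  then show ?thesis unfolding edge_base_def by (rule someI_ex[where P="\<lambda>z. z \<in> {u, v} \<and> (\<forall>w\<in>{u, v}. l1 z < l1 w \<or> w = z)", THEN conjunct1])
qed

lemma first_crossing:
  fixes g :: "nat \<Rightarrow> int ^ 'd" and z :: "int ^ 'd" and R c :: nat
  assumes adjg: "\<forall>k<c. adj (g k) (g (Suc k))"
    and g0: "g 0 \<notin> box_at z (3 * real R)"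
    and gc: "g c \<in> box_at z (real R - 1)"
    and R1: "R \<ge> 1"
  shows "\<exists>a b. b < a \<and> a < c \<and> (\<forall>k\<le>a. g k \<notin> box_at z (real R - 1))
     \<and> (\<forall>k. b \<le> k \<and> k \<le> a \<longrightarrow> g k \<in> box_at z (3 * real R))
     \<and> g b \<notin> box_at z (3 * real R - 1) \<and> g a \<in> box_at z (real R)"
proof -
  have sub1: "box_at z (real R - 1) \<subseteq> box_at z (real R)" by (rule box_mono) simp
  have sub2: "box_at z (real R) \<subseteq> box_at z (3 * real R - 1)" by (rule box_mono) (use R1 in simp)
  have sub3: "box_at z (3 * real R - 1) \<subseteq> box_at z (3 * real R)" by (rule box_mono) simp
  define P where "P k \<longleftrightarrow> g k \<in> box_at z (real R)" for k
  have Pc: "P c" using gc sub1 unfolding P_def by auto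
  define a where "a = (LEAST k. P k)"
  have Pa: "P a" unfolding a_def using Pc by (rule LeastI)
  have ac: "a \<le> c" unfolding a_def using Pc by (rule Least_le)
  have notP: "\<not> P k" if "k < a" for k using that unfolding a_def by (rule not_less_Least)
  have a0: "a \<noteq> 0"
  proof
    assume "a = 0"
    then have "g 0 \<in> box_at z (real R)" using Pa unfolding P_def by simp
    then show False using g0 sub2 sub3 by blast
  qed
  then obtain a' where a': "a = Suc a'" by (cases a) auto
  have ga: "g a \<notin> box_at z (real R - 1)"
  proof
    assume h: "g a \<in> box_at z (real R - 1)"
    have "adj (g a') (g a)" using adjg ac a' by auto
    then have "g a' \<in> box_at z (real R - 1 + 1)" using h by (rule box_adj[OF adj_sym])
    then have "P a'" unfolding P_def by simp
    then show False using notP[of a'] a' by simp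
  qed
  have "a \<noteq> c" using ga gc by auto
  then have ac2: "a < c" using ac by simp
  have avoid: "\<forall>k\<le>a. g k \<notin> box_at z (real R - 1)"
  proof (intro allI impI)
    fix k assume "k \<le> a"
    then consider "k < a" | "k = a" by linarith
    then show "g k \<notin> box_at z (real R - 1)"
    proof cases
      case 1 then show ?thesis using notP[of k] sub1 unfolding P_def by auto
    qed (use ga in simp)
  qed
  define Q where "Q k \<longleftrightarrow> k \<le> a \<and> g k \<notin> box_at z (3 * real R - 1)" for k
  have Q0: "Q 0" using g0 sub3 unfolding Q_def by auto
  have Qbound: "\<forall>y. Q y \<longrightarrow> y \<le> a" unfolding Q_def by auto
  define b where "b = (GREATEST k. Q k)"
  have Qb: "Q b" unfolding b_def using Q0 Qbound by (intro GreatestI_nat[of Q 0 a]) auto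
  have notQ: "\<not> Q k" if "b < k" for k
  proof
    assume "Q k"
    then have "k \<le> b" unfolding b_def using Qbound by (intro Greatest_le_nat[of Q k a]) auto
    then show False using that by simp
  qed
  have ba: "b < a"
  proof -
    have "b \<le> a" using Qb unfolding Q_def by simp
    moreover have "b \<noteq> a" using Qb Pa sub2 unfolding Q_def P_def by auto
    ultimately show ?thesis by simp
  qed
  have inner: "g k \<in> box_at z (3 * real R - 1)" if "b < k" "k \<le> a" for k
    using notQ[OF that(1)] that(2) unfolding Q_def by auto
  have gb: "g b \<in> box_at z (3 * real R)"
  proof -
    have "adj (g b) (g (Suc b))" using adjg ba ac2 by auto
    moreover have "g (Suc b) \<in> box_at z (3 * real R - 1)" using inner[of "Suc b"] ba by simp
    ultimately have "g b \<in> box_at z (3 * real R - 1 + 1)" by (rule box_adj[OF adj_sym])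
    then show ?thesis by simp
  qed
  have seg: "\<forall>k. b \<le> k \<and> k \<le> a \<longrightarrow> g k \<in> box_at z (3 * real R)"
  proof (intro allI impI)
    fix k assume "b \<le> k \<and> k \<le> a"
    then consider "k = b" | "b < k" "k \<le> a" by linarith
    then show "g k \<in> box_at z (3 * real R)"
    proof cases
      case 1 then show ?thesis using gb by simp
    next
      case 2 then show ?thesis using inner sub3 by blast
    qed
  qed
  have gb2: "g b \<notin> box_at z (3 * real R - 1)" using Qb unfolding Q_def by simp
  have ga2: "g a \<in> box_at z (real R)" using Pa unfolding P_def by simp
  show ?thesis
    by (intro exI[of _ a] exI[of _ b] conjI ba ac2 avoid seg gb2 ga2)
qed

lemma path_edges_nonempty: "f \<in> path_edges l \<Longrightarrow> f \<noteq> {}"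
  unfolding path_edges_def by auto

lemma splice:
  assumes g: "is_path \<gamma>" and dec: "\<gamma> = pre @ mid @ suf" and mid: "mid \<noteq> []"
    and q: "walk q" and hq: "hd q = hd mid" and lq: "last q = last mid"
  shows "walk (pre @ q @ suf)" "hd (pre @ q @ suf) = hd \<gamma>" "last (pre @ q @ suf) = last \<gamma>"
    "set (pre @ q @ suf) = set pre \<union> set q \<union> set suf"
    "path_edges (pre @ q @ suf) \<subseteq> (path_edges \<gamma> - path_edges mid) \<union> path_edges q"
    "path_edges mid \<subseteq> path_edges \<gamma>"
proof -
  have qne: "q \<noteq> []" using q unfolding walk_def by simp
  have wg: "walk (pre @ mid @ suf)" using g dec by (simp add: is_path_walk)
  have dg: "distinct (pre @ mid @ suf)" using g dec by (simp add: is_path_walk)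
  have hd1: "hd (q @ suf) = hd mid" using qne hq by simp
  have hd2: "hd (mid @ suf) = hd mid" using mid by simp
  have wms: "walk (mid @ suf)" and wpre: "pre \<noteq> [] \<Longrightarrow> walk pre \<and> adj (last pre) (hd mid)"
    using wg mid hd2 walk_append[of pre "mid @ suf"] by (auto split: if_splits)
  have wmid: "walk mid" and wsuf: "suf \<noteq> [] \<Longrightarrow> walk suf \<and> adj (last mid) (hd suf)"
    using wms mid walk_append[of mid suf] by (auto split: if_splits)
  have wqs: "walk (q @ suf)"
    using q qne wsuf lq walk_append[of q suf] by (cases "suf = []") auto
  show "walk (pre @ q @ suf)"
    using wqs qne wpre hd1 walk_append[of pre "q @ suf"] by (cases "pre = []") auto
  show "hd (pre @ q @ suf) = hd \<gamma>" using dec qne mid hq by (cases pre) auto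
  show "last (pre @ q @ suf) = last \<gamma>" using dec qne mid lq by (cases suf) auto
  show "set (pre @ q @ suf) = set pre \<union> set q \<union> set suf" by auto
  define C1 where "C1 = (if pre = [] then {} else {{last pre, hd mid}})"
  define C2 where "C2 = (if suf = [] then {} else {{last mid, hd suf}})"
  have Eg: "path_edges \<gamma> = path_edges pre \<union> path_edges mid \<union> path_edges suf \<union> C1 \<union> C2"
    unfolding dec path_edges_append[of pre "mid @ suf"] path_edges_append[of mid suf] C1_def C2_def
    using mid hd2 by auto
  have Ew: "path_edges (pre @ q @ suf) = path_edges pre \<union> path_edges q \<union> path_edges suf \<union> C1 \<union> C2"
    unfolding path_edges_append[of pre "q @ suf"] path_edges_append[of q suf] C1_def C2_def
    using qne hd1 lq by auto
  have disj: "f \<notin> path_edges mid" if "f \<in> path_edges pre \<union> path_edges suf \<union> C1 \<union> C2" for f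
  proof
    assume fm: "f \<in> path_edges mid"
    then have fsub: "f \<subseteq> set mid" by (rule path_edges_subset_set)
    have d1: "set pre \<inter> set mid = {}" and d2: "set suf \<inter> set mid = {}" using dg by auto
    from that consider "f \<in> path_edges pre" | "f \<in> path_edges suf" | "f \<in> C1" | "f \<in> C2" by blast
    then show False
    proof cases
      case 1 then show False using path_edges_subset_set[OF 1] path_edges_nonempty[OF 1] fsub d1 by blast
    next
      case 2 then show False using path_edges_subset_set[OF 2] path_edges_nonempty[OF 2] fsub d2 by blast
    next
      case 3
      then have "pre \<noteq> []" "f = {last pre, hd mid}" unfolding C1_def by (auto split: if_splits)
      then have "last pre \<in> set mid" "last pre \<in> set pre" using fsub by auto
      then show False using d1 by blast
    next
      case 4
      then have "suf \<noteq> []" "f = {last mid, hd suf}" unfolding C2_def by (auto split: if_splits)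
      then have "hd suf \<in> set mid" "hd suf \<in> set suf" using fsub by auto
      then show False using d2 by blast
    qed
  qed
  show "path_edges (pre @ q @ suf) \<subseteq> (path_edges \<gamma> - path_edges mid) \<union> path_edges q"
    unfolding Ew Eg using disj by blast
  show "path_edges mid \<subseteq> path_edges \<gamma>" unfolding Eg by blast
qed

definition wt :: "((int ^ 'd) set \<Rightarrow> ereal) \<Rightarrow> real \<Rightarrow> (int ^ 'd) set \<Rightarrow> real" where
  "wt \<tau> H f = real_of_ereal (min (\<tau> f) (ereal H))"

lemma min_ereal_fin: "0 \<le> x \<Longrightarrow> ereal (real_of_ereal (min x (ereal H))) = min x (ereal H)"
  by (cases x) (auto simp: min_def)

lemma wt_nonneg: "0 \<le> \<tau> f \<Longrightarrow> 0 \<le> H \<Longrightarrow> 0 \<le> wt \<tau> H f"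
  unfolding wt_def by (cases "\<tau> f") (auto simp: min_def)

lemma walk_edge_nonneg:
  assumes nn: "\<forall>u v. adj u v \<longrightarrow> \<tau> {u, v} \<ge> 0" and w: "walk p" and f: "f \<in> path_edges p"
  shows "0 \<le> \<tau> f"
  using path_edges_walk_adj[OF w f] nn by auto

lemma path_weight_real:
  assumes nn: "\<forall>u v. adj u v \<longrightarrow> \<tau> {u, v} \<ge> 0" and w: "walk p"
  shows "path_weight \<tau> H p = ereal (\<Sum>f\<in>path_edges p. wt \<tau> H f)"
proof -
  have "path_weight \<tau> H p = (\<Sum>f\<in>path_edges p. ereal (wt \<tau> H f))"
    unfolding path_weight_def wt_def
    by (rule sum.cong) (auto simp: min_ereal_fin[OF walk_edge_nonneg[OF nn w]])
  then show ?thesis by (simp add: sum_ereal)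
qed

lemma sum_Un_le_nonneg:
  fixes g :: "'a \<Rightarrow> real"
  assumes "finite A" "finite B" "\<forall>x\<in>A \<union> B. 0 \<le> g x"
  shows "sum g (A \<union> B) \<le> sum g A + sum g B"
proof -
  have "sum g (A \<union> B) = sum g A + sum g B - sum g (A \<inter> B)" using assms(1,2) by (rule sum_Un)
  moreover have "0 \<le> sum g (A \<inter> B)" using assms(3) by (intro sum_nonneg) auto
  ultimately show ?thesis by simp
qed

lemma seg_geodesic:
  assumes nn: "\<forall>u v. adj u v \<longrightarrow> \<tau> {u, v} \<ge> 0" and H: "H > 0"
    and g: "\<gamma> \<in> geodesics \<tau> H UNIV x y" and dec: "\<gamma> = pre @ mid @ suf" and mid: "mid \<noteq> []"
    and B: "set mid \<subseteq> B"
  shows "mid \<in> geodesics \<tau> H B (hd mid) (last mid)"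
proof -
  have gp: "is_path \<gamma>" "hd \<gamma> = x" "last \<gamma> = y"
    and gw: "path_weight \<tau> H \<gamma> = passage_time \<tau> H UNIV x y"
    using g unfolding geodesics_def path_from_to_def by auto
  have wg: "walk (pre @ mid @ suf)" and dg: "distinct (pre @ mid @ suf)"
    using gp(1) dec by (simp_all add: is_path_walk)
  have wmid: "walk mid"
    using wg mid walk_append[of pre "mid @ suf"] walk_append[of mid suf] by (auto split: if_splits)
  have pmid: "is_path mid" using wmid dg by (simp add: is_path_walk)
  have pft: "path_from_to mid (hd mid) (last mid)" using pmid unfolding path_from_to_def by simp
  let ?S = "{p. path_from_to p (hd mid) (last mid) \<and> set p \<subseteq> B}"
  have inS: "mid \<in> ?S" using pft B by simp
  have le1: "passage_time \<tau> H B (hd mid) (last mid) \<le> path_weight \<tau> H mid"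
    unfolding passage_time_def using inS by (rule INF_lower)
  have le2: "path_weight \<tau> H mid \<le> path_weight \<tau> H q" if qS: "q \<in> ?S" for q
  proof (rule ccontr)
    assume "\<not> path_weight \<tau> H mid \<le> path_weight \<tau> H q"
    then have lt: "path_weight \<tau> H q < path_weight \<tau> H mid" by simp
    have qp: "is_path q" "hd q = hd mid" "last q = last mid" using qS unfolding path_from_to_def by auto
    have wq: "walk q" using qp(1) by (simp add: is_path_walk)
    note sp = splice[OF gp(1) dec mid wq qp(2) qp(3)]
    obtain \<eta> where eta: "is_path \<eta>" "hd \<eta> = hd (pre @ q @ suf)" "last \<eta> = last (pre @ q @ suf)"
      "path_edges \<eta> \<subseteq> path_edges (pre @ q @ suf)"
      using loop_erase[OF sp(1)] by blast
    have weta: "walk \<eta>" using eta(1) by (simp add: is_path_walk)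
    have "path_from_to \<eta> x y" using eta sp gp unfolding path_from_to_def by simp
    then have "passage_time \<tau> H UNIV x y \<le> path_weight \<tau> H \<eta>"
      unfolding passage_time_def by (intro INF_lower) simp
    then have A: "path_weight \<tau> H \<gamma> \<le> path_weight \<tau> H \<eta>" using gw by simp
    define w where "w = wt \<tau> H"
    let ?Eg = "path_edges \<gamma>" and ?Em = "path_edges mid" and ?Eq = "path_edges q" and ?Ee = "path_edges \<eta>"
    have r1: "(\<Sum>f\<in>?Eg. w f) \<le> (\<Sum>f\<in>?Ee. w f)"
      using A unfolding w_def path_weight_real[OF nn weta] path_weight_real[OF nn walk_append[THEN iffD2, OF _] ] 
      by (simp add: path_weight_real[OF nn wg[folded dec]])
    have r2: "(\<Sum>f\<in>?Eq. w f) < (\<Sum>f\<in>?Em. w f)"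
      using lt unfolding w_def by (simp add: path_weight_real[OF nn wq] path_weight_real[OF nn wmid])
    have nng: "0 \<le> w f" if "f \<in> ?Eg \<union> ?Eq" for f
      unfolding w_def using that H walk_edge_nonneg[OF nn wg[folded dec]] walk_edge_nonneg[OF nn wq]
      by (auto intro!: wt_nonneg)
    have sub: "?Ee \<subseteq> (?Eg - ?Em) \<union> ?Eq" using eta(4) sp(5) by blast
    have r3: "(\<Sum>f\<in>?Ee. w f) \<le> (\<Sum>f\<in>(?Eg - ?Em) \<union> ?Eq. w f)"
      by (rule sum_mono2) (use sub nng finite_path_edges in auto)
    have r4: "(\<Sum>f\<in>(?Eg - ?Em) \<union> ?Eq. w f) \<le> (\<Sum>f\<in>?Eg - ?Em. w f) + (\<Sum>f\<in>?Eq. w f)"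
      by (rule sum_Un_le_nonneg) (use nng finite_path_edges in auto)
    have r5: "(\<Sum>f\<in>?Eg. w f) = (\<Sum>f\<in>?Eg - ?Em. w f) + (\<Sum>f\<in>?Em. w f)"
      by (rule sum.subset_diff) (use sp(6) finite_path_edges in auto)
    show False using r1 r2 r3 r4 r5 by linarith
  qed
  have "path_weight \<tau> H mid \<le> passage_time \<tau> H B (hd mid) (last mid)"
    unfolding passage_time_def by (rule INF_greatest) (rule le2)
  then have "path_weight \<tau> H mid = passage_time \<tau> H B (hd mid) (last mid)" using le1 by simp
  then show ?thesis unfolding geodesics_def using pft B by simp
qed

lemma Dq_obtain:
  assumes "Dq \<tau> lam U A B \<le> ereal r"
  shows "\<exists>p. is_path p \<and> set p \<subseteq> U \<and> hd p \<in> A \<and> last p \<in> B \<and>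
     (\<forall>f\<in>path_edges p. q_open \<tau> lam f) \<and> real (length p - 1) \<le> r"
proof -
  define S where "S = {p. is_path p \<and> set p \<subseteq> U \<and> hd p \<in> A \<and> last p \<in> B \<and>
                 (\<forall>e\<in>path_edges p. q_open \<tau> lam e)}"
  have D: "Dq \<tau> lam U A B = (INF p\<in>S. ereal (real (length p - 1)))"
    unfolding Dq_def S_def by simp
  have "S \<noteq> {}"
  proof
    assume "S = {}"
    then have "Dq \<tau> lam U A B = top" unfolding D by simp
    then show False using assms by (simp add: top_ereal_def)
  qed
  then obtain p0 where p0: "p0 \<in> S" by blast
  define P where "P n \<longleftrightarrow> (\<exists>p\<in>S. length p - 1 = n)" for n
  have "P (length p0 - 1)" unfolding P_def using p0 by blast
  then have Pn: "P (Least P)" by (rule LeastI)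
  then obtain p where p: "p \<in> S" "length p - 1 = Least P" unfolding P_def by blast
  have "ereal (real (Least P)) \<le> Dq \<tau> lam U A B"
    unfolding D
  proof (rule INF_greatest)
    fix p' assume "p' \<in> S"
    then have "Least P \<le> length p' - 1" by (intro Least_le) (auto simp: P_def)
    then show "ereal (real (Least P)) \<le> ereal (real (length p' - 1))" by simp
  qed
  then have "ereal (real (Least P)) \<le> ereal r" using assms by (rule order_trans)
  then have "real (length p - 1) \<le> r" using p(2) by simp
  then show ?thesis using p(1) unfolding S_def by blast
qed

lemma eff_radius_obtain:
  assumes "eff_radius \<tau> H lam C e = enat R"
  shows "3 \<le> R \<and> eff_radius_ok \<tau> H lam C e R"
proof -
  define S where "S = {N. 3 \<le> N \<and> eff_radius_ok \<tau> H lam C e N}"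
  have E: "eff_radius \<tau> H lam C e = (INF N\<in>S. enat N)" unfolding eff_radius_def S_def by simp
  have "S \<noteq> {}"
  proof
    assume "S = {}"
    then have "eff_radius \<tau> H lam C e = top" unfolding E by simp
    then show False using assms by (simp add: top_enat_def)
  qed
  then obtain n0 where n0: "n0 \<in> S" by blast
  then have LS: "Least (\<lambda>n. n \<in> S) \<in> S" by (rule LeastI)
  have "enat (Least (\<lambda>n. n \<in> S)) \<le> eff_radius \<tau> H lam C e"
    unfolding E
  proof (rule INF_greatest)
    fix N assume "N \<in> S"
    then show "enat (Least (\<lambda>n. n \<in> S)) \<le> enat N" by (simp add: Least_le)
  qed
  moreover have "eff_radius \<tau> H lam C e \<le> enat (Least (\<lambda>n. n \<in> S))"
    unfolding E using LS by (rule INF_lower)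
  ultimately have "R = Least (\<lambda>n. n \<in> S)" using assms by simp
  then show ?thesis using LS unfolding S_def by simp
qed

lemma seg_props:
  fixes l :: "'a list"
  assumes "b \<le> a" "a < length l"
  shows "l = take b l @ drop b (take (Suc a) l) @ drop (Suc a) l"
    "drop b (take (Suc a) l) \<noteq> []"
    "hd (drop b (take (Suc a) l)) = l ! b"
    "last (drop b (take (Suc a) l)) = l ! a"
    "set (drop b (take (Suc a) l)) = {l ! k | k. b \<le> k \<and> k \<le> a}"
    "set (take b l) = {l ! k | k. k < b}"
    "set (drop (Suc a) l) = {l ! k | k. a < k \<and> k < length l}"
proof -
  have "take b (take (Suc a) l) = take b l" using assms by (simp add: min_def)
  then have "take (Suc a) l = take b l @ drop b (take (Suc a) l)"
    by (metis append_take_drop_id)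
  then show "l = take b l @ drop b (take (Suc a) l) @ drop (Suc a) l"
    by (metis append.assoc append_take_drop_id)
  have len: "length (drop b (take (Suc a) l)) = Suc a - b" using assms by simp
  then show ne: "drop b (take (Suc a) l) \<noteq> []" using assms by auto
  show "hd (drop b (take (Suc a) l)) = l ! b"
    using ne assms by (simp add: hd_conv_nth)
  show "last (drop b (take (Suc a) l)) = l ! a"
    using ne assms len by (simp add: last_conv_nth)
  show "set (drop b (take (Suc a) l)) = {l ! k | k. b \<le> k \<and> k \<le> a}"
  proof
    show "set (drop b (take (Suc a) l)) \<subseteq> {l ! k | k. b \<le> k \<and> k \<le> a}"
    proof
      fix v assume "v \<in> set (drop b (take (Suc a) l))"
      then obtain i where i: "i < Suc a - b" "v = drop b (take (Suc a) l) ! i"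
        using len by (auto simp: in_set_conv_nth)
      then have "v = l ! (b + i)" using assms by simp
      then show "v \<in> {l ! k | k. b \<le> k \<and> k \<le> a}" using i(1) by (intro CollectI exI[of _ "b + i"]) auto
    qed
  next
    show "{l ! k | k. b \<le> k \<and> k \<le> a} \<subseteq> set (drop b (take (Suc a) l))"
    proof
      fix v assume "v \<in> {l ! k | k. b \<le> k \<and> k \<le> a}"
      then obtain k where k: "b \<le> k" "k \<le> a" "v = l ! k" by blast
      have "drop b (take (Suc a) l) ! (k - b) = l ! k" using k assms by simp
      moreover have "k - b < length (drop b (take (Suc a) l))" using len k by simp
      ultimately show "v \<in> set (drop b (take (Suc a) l))" using k(3) by (metis nth_mem)
    qed
  qed
  show "set (take b l) = {l ! k | k. k < b}"
  proof
    show "set (take b l) \<subseteq> {l ! k | k. k < b}"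
      by (force simp: in_set_conv_nth)
  next
    show "{l ! k | k. k < b} \<subseteq> set (take b l)"
    proof
      fix v assume "v \<in> {l ! k | k. k < b}"
      then obtain k where k: "k < b" "v = l ! k" by blast
      then have "take b l ! k = v" "k < length (take b l)" using assms by auto
      then show "v \<in> set (take b l)" by (metis nth_mem)
    qed
  qed
  show "set (drop (Suc a) l) = {l ! k | k. a < k \<and> k < length l}"
  proof
    show "set (drop (Suc a) l) \<subseteq> {l ! k | k. a < k \<and> k < length l}"
    proof
      fix v assume "v \<in> set (drop (Suc a) l)"
      then obtain i where i: "i < length l - Suc a" "v = drop (Suc a) l ! i"
        by (force simp: in_set_conv_nth)
      then have "v = l ! (Suc a + i)" using assms by simp
      then show "v \<in> {l ! k | k. a < k \<and> k < length l}" using i(1)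
        by (intro CollectI exI[of _ "Suc a + i"]) auto
    qed
  next
    show "{l ! k | k. a < k \<and> k < length l} \<subseteq> set (drop (Suc a) l)"
    proof
      fix v assume "v \<in> {l ! k | k. a < k \<and> k < length l}"
      then obtain k where k: "a < k" "k < length l" "v = l ! k" by blast
      have "drop (Suc a) l ! (k - Suc a) = l ! k" using k by simp
      moreover have "k - Suc a < length (drop (Suc a) l)" using k by simp
      ultimately show "v \<in> set (drop (Suc a) l)" using k(3) by (metis nth_mem)
    qed
  qed
qed

theorem proposition2p5:
  fixes \<tau> :: "(int ^ 'd) set \<Rightarrow> ereal"
    and H lam C :: real
    and x y :: "int ^ 'd"
    and \<gamma> :: "(int ^ 'd) list"
    and e :: "(int ^ 'd) set"
    and R :: nat
  assumes "C \<ge> 3" and "H > 0" and "lam > 0"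
    and "\<forall>u v. adj u v \<longrightarrow> \<tau> {u, v} \<ge> 0"
    and "\<gamma> \<in> geodesics \<tau> H UNIV x y"
    and "e \<in> path_edges \<gamma>"
    and "eff_radius \<tau> H lam C e = enat R"
    and "x \<notin> box_at (edge_base e) (3 * real R)"
    and "y \<notin> box_at (edge_base e) (3 * real R)"
  shows "\<exists>\<eta>. path_from_to \<eta> x y
            \<and> set \<eta> \<inter> box_at (edge_base e) (real R - 1) = {}
            \<and> (\<forall>f \<in> path_edges \<eta> - path_edges \<gamma>. q_open \<tau> lam f)
            \<and> real (card (path_edges \<eta> - path_edges \<gamma>)) \<le> C * real R"
proof -
  note nn = assms(4)
  have gp: "is_path \<gamma>" "hd \<gamma> = x" "last \<gamma> = y"
    using assms(5) unfolding geodesics_def path_from_to_def by auto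
  define L where "L = length \<gamma>"
  have gne: "\<gamma> \<noteq> []" using gp(1) unfolding is_path_def by simp
  then have L0: "0 < L" unfolding L_def by simp
  have adjg: "adj (\<gamma> ! i) (\<gamma> ! Suc i)" if "Suc i < L" for i
    using gp(1) that unfolding is_path_def L_def by blast
  obtain k0 where k0: "e = {\<gamma> ! k0, \<gamma> ! Suc k0}" "Suc k0 < L"
    using assms(6) unfolding path_edges_def L_def by blast
  define z where "z = edge_base e"
  have "z \<in> e" using edge_base_mem[OF adjg[OF k0(2)]] k0(1) unfolding z_def by simp
  then obtain c where c: "c < L" "\<gamma> ! c = z" using k0 by (metis Suc_lessD insert_iff singletonD)
  have Rp: "3 \<le> R" "eff_radius_ok \<tau> H lam C e R" using eff_radius_obtain[OF assms(7)] by auto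
  have R1: "1 \<le> R" using Rp by simp
  have zin: "z \<in> box_at z (real R - 1)" by (rule center_in_box) (use R1 in simp)
  have x0: "\<gamma> ! 0 = x" using gp(2) gne by (simp add: hd_conv_nth)
  have yL: "\<gamma> ! (L - 1) = y" using gp(3) gne unfolding L_def by (simp add: last_conv_nth)
  have xn: "x \<notin> box_at z (3 * real R)" and yn: "y \<notin> box_at z (3 * real R)"
    using assms(8,9) unfolding z_def by auto
  have sub1: "box_at z (real R - 1) \<subseteq> box_at z (real R)" by (rule box_mono) simp
  have subC: "box_at z (3 * real R) \<subseteq> box_at z (C * real R)"
    by (rule box_mono) (use assms(1) in \<open>simp add: mult_right_mono\<close>)
  have adjf: "\<forall>k<c. adj (\<gamma> ! k) (\<gamma> ! Suc k)" using adjg c by auto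
  obtain a1 b1 where f: "b1 < a1" "a1 < c" "\<forall>k\<le>a1. \<gamma> ! k \<notin> box_at z (real R - 1)"
     "\<forall>k. b1 \<le> k \<and> k \<le> a1 \<longrightarrow> \<gamma> ! k \<in> box_at z (3 * real R)"
     "\<gamma> ! b1 \<notin> box_at z (3 * real R - 1)" "\<gamma> ! a1 \<in> box_at z (real R)"
    using first_crossing[of c "\<lambda>k. \<gamma> ! k" z R, OF adjf _ _ R1] x0 xn c zin by auto
  have adjb: "\<forall>k<L - 1 - c. adj (\<gamma> ! (L - 1 - k)) (\<gamma> ! (L - 1 - Suc k))"
  proof (intro allI impI)
    fix k assume k: "k < L - 1 - c"
    define i where "i = L - 1 - Suc k"
    have si: "Suc i = L - 1 - k" "Suc i < L" using k c unfolding i_def by auto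
    have "adj (\<gamma> ! i) (\<gamma> ! Suc i)" using adjg si(2) by simp
    then show "adj (\<gamma> ! (L - 1 - k)) (\<gamma> ! (L - 1 - Suc k))"
      using si(1) unfolding i_def by (metis adj_sym)
  qed
  have gc': "\<gamma> ! (L - 1 - (L - 1 - c)) \<in> box_at z (real R - 1)"
    using c zin by (simp add: diff_diff_cancel)
  obtain a2 b2 where b: "b2 < a2" "a2 < L - 1 - c" "\<forall>k\<le>a2. \<gamma> ! (L - 1 - k) \<notin> box_at z (real R - 1)"
     "\<forall>k. b2 \<le> k \<and> k \<le> a2 \<longrightarrow> \<gamma> ! (L - 1 - k) \<in> box_at z (3 * real R)"
     "\<gamma> ! (L - 1 - b2) \<notin> box_at z (3 * real R - 1)" "\<gamma> ! (L - 1 - a2) \<in> box_at z (real R)"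
    using first_crossing[of "L - 1 - c" "\<lambda>k. \<gamma> ! (L - 1 - k)" z R, OF adjb _ gc' R1] yL yn by auto
  define i1 where "i1 = L - 1 - a2"
  define j1 where "j1 = L - 1 - b2"
  have ij1: "c < i1" "i1 < j1" "j1 < L" using b c L0 unfolding i1_def j1_def by auto
  define seg1 where "seg1 = drop b1 (take (Suc a1) \<gamma>)"
  define seg2 where "seg2 = drop i1 (take (Suc j1) \<gamma>)"
  have a1L: "a1 < length \<gamma>" using f(2) c unfolding L_def by simp
  have j1L: "j1 < length \<gamma>" using ij1 unfolding L_def by simp
  note sp1 = seg_props[OF less_imp_le[OF f(1)] a1L, folded seg1_def]
  note sp2 = seg_props[OF less_imp_le[OF ij1(2)] j1L, folded seg2_def]
  have set1: "set seg1 \<subseteq> box_at z (3 * real R) - box_at z (real R - 1)"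
    unfolding sp1(5) using f(3,4) by auto
  have set2: "set seg2 \<subseteq> box_at z (3 * real R) - box_at z (real R - 1)"
  proof
    fix v assume "v \<in> set seg2"
    then obtain k where k: "i1 \<le> k" "k \<le> j1" "v = \<gamma> ! k" unfolding sp2(5) by blast
    have kk: "b2 \<le> L - 1 - k" "L - 1 - k \<le> a2" using k ij1 unfolding i1_def j1_def by auto
    have "v = \<gamma> ! (L - 1 - (L - 1 - k))" using k ij1 by simp
    then show "v \<in> box_at z (3 * real R) - box_at z (real R - 1)" using b(3,4) kk by auto
  qed
  have geo1: "seg1 \<in> geodesics \<tau> H (box_at z (C * real R)) (hd seg1) (last seg1)"
    using seg_geodesic[OF nn assms(2) assms(5) sp1(1) sp1(2)] set1 subC by blast
  have geo2: "seg2 \<in> geodesics \<tau> H (box_at z (C * real R)) (hd seg2) (last seg2)"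
    using seg_geodesic[OF nn assms(2) assms(5) sp2(1) sp2(2)] set2 subC by blast
  have gi1: "seg1 \<in> geodesics_in \<tau> H (box_at z (C * real R))"
    unfolding geodesics_in_def using geo1 set1 subC hd_in_set[OF sp1(2)] last_in_set[OF sp1(2)] by blast
  have gi2: "seg2 \<in> geodesics_in \<tau> H (box_at z (C * real R))"
    unfolding geodesics_in_def using geo2 set2 subC hd_in_set[OF sp2(2)] last_in_set[OF sp2(2)] by blast
  have cr1: "seg1 \<in> crossings e R"
  proof -
    have "is_path seg1" using geo1 unfolding geodesics_def path_from_to_def by simp
    moreover have "hd seg1 \<in> bdry_at z (3 * real R)"
      unfolding sp1(3) bdry_at_def using f(4,5) f(1) by auto
    moreover have "last seg1 \<in> bdry_at z (real R)"
      unfolding sp1(4) bdry_at_def using f(3,6) by auto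
    ultimately show ?thesis unfolding crossings_def z_def[symmetric] using set1 by blast
  qed
  have cr2: "seg2 \<in> crossings e R"
  proof -
    have "is_path seg2" using geo2 unfolding geodesics_def path_from_to_def by simp
    moreover have "hd seg2 \<in> bdry_at z (real R)"
      unfolding sp2(3) bdry_at_def i1_def using b(3,6) by auto
    moreover have "last seg2 \<in> bdry_at z (3 * real R)"
      unfolding sp2(4) bdry_at_def j1_def using b(4,5) b(1) by auto
    ultimately show ?thesis unfolding crossings_def z_def[symmetric] using set2 by blast
  qed
  have "Dq \<tau> lam (annulus e R) (set seg1) (set seg2) \<le> ereal (C * real R)"
    using Rp(2) gi1 gi2 cr1 cr2 unfolding eff_radius_ok_def z_def by blast
  then obtain p where p: "is_path p" "set p \<subseteq> annulus e R" "hd p \<in> set seg1" "last p \<in> set seg2"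
    "\<forall>f\<in>path_edges p. q_open \<tau> lam f" "real (length p - 1) \<le> C * real R"
    using Dq_obtain by blast
  obtain i where i: "b1 \<le> i" "i \<le> a1" "hd p = \<gamma> ! i" using p(3) unfolding sp1(5) by blast
  obtain j where j: "i1 \<le> j" "j \<le> j1" "last p = \<gamma> ! j" using p(4) unfolding sp2(5) by blast
  have ij: "i \<le> j" using i j f ij1 by simp
  have jL: "j < length \<gamma>" using j ij1 unfolding L_def by simp
  define mid where "mid = drop i (take (Suc j) \<gamma>)"
  note spm = seg_props[OF ij jL, folded mid_def]
  have wp: "walk p" using p(1) by (simp add: is_path_walk)
  note sp = splice[OF gp(1) spm(1) spm(2) wp, unfolded spm(3) spm(4), OF i(3) j(3)]
  obtain \<eta> where eta: "is_path \<eta>" "hd \<eta> = hd (take i \<gamma> @ p @ drop (Suc j) \<gamma>)"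
      "last \<eta> = last (take i \<gamma> @ p @ drop (Suc j) \<gamma>)"
      "set \<eta> \<subseteq> set (take i \<gamma> @ p @ drop (Suc j) \<gamma>)"
      "path_edges \<eta> \<subseteq> path_edges (take i \<gamma> @ p @ drop (Suc j) \<gamma>)"
    using loop_erase[OF sp(1)] by blast
  have pft: "path_from_to \<eta> x y" using eta(1,2,3) sp(2,3) gp unfolding path_from_to_def by simp
  have avoid: "set \<eta> \<inter> box_at z (real R - 1) = {}"
  proof -
    have A1: "set (take i \<gamma>) \<inter> box_at z (real R - 1) = {}"
      unfolding spm(6) using f(3) i(2) by auto
    have A2: "set p \<inter> box_at z (real R - 1) = {}"
      using p(2) sub1 unfolding annulus_def z_def by auto
    have A3: "set (drop (Suc j) \<gamma>) \<inter> box_at z (real R - 1) = {}"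
    proof -
      have "\<gamma> ! k \<notin> box_at z (real R - 1)" if "j < k" "k < length \<gamma>" for k
      proof -
        have "L - 1 - k \<le> a2" using that j ij1 unfolding i1_def L_def by auto
        then have "\<gamma> ! (L - 1 - (L - 1 - k)) \<notin> box_at z (real R - 1)" using b(3) by blast
        moreover have "L - 1 - (L - 1 - k) = k" using that unfolding L_def by auto
        ultimately show ?thesis by simp
      qed
      then show ?thesis unfolding spm(7) by auto
    qed
    show ?thesis using eta(4) sp(4) A1 A2 A3 by blast
  qed
  have esub: "path_edges \<eta> - path_edges \<gamma> \<subseteq> path_edges p" using eta(5) sp(5) by blast
  have qo: "\<forall>f \<in> path_edges \<eta> - path_edges \<gamma>. q_open \<tau> lam f" using esub p(5) by blast
  have "card (path_edges \<eta> - path_edges \<gamma>) \<le> card (path_edges p)"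
    by (rule card_mono[OF finite_path_edges esub])
  also have "\<dots> \<le> length p - 1" by (rule card_path_edges)
  finally have "real (card (path_edges \<eta> - path_edges \<gamma>)) \<le> real (length p - 1)" by simp
  then have cardle: "real (card (path_edges \<eta> - path_edges \<gamma>)) \<le> C * real R" using p(6) by linarith
  show ?thesis unfolding z_def[symmetric] using pft avoid qo cardle by blast
qed

end
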